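(* Let $G=\mathbb{Z}_2\times\mathbb{Z}_4$ and let $\theta_1,\theta_2$ be normalised orthomorphisms of $G$, with associated sets $A_{ij}$ (for $\theta_1$) and $A'_{ij}$ (for $\theta_2$). Write $\delta(g)=\theta_1(g)^{-1}\theta_2(g)$. Then $\theta_1\perp\theta_2$ if and only if (a) the sets $\delta(A_{44}\cap A'_{44})$, $\delta(A_{24}\cap A'_{24})$, $\delta(A_{42}\cap A'_{42})$, $\delta(A_{22}\cap A'_{22})$ are pairwise disjoint and their union is $\{g\in G: o(g)=2\}$, and (b) the sets $\delta(A_{44}\cap A'_{42})$, $\delta(A_{42}\cap A'_{44})$, $\delta(A_{24}\cap A'_{22})$, $\delta(A_{22}\cap A'_{24})$ are pairwise disjoint and their union is $\{g\in G: o(g)=4\}$.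
   Context: $G$ is written multiplicatively with identity $e$; $o(g)$ is the order of $g$. A normalised orthomorphism of $G$ is a bijection $\theta\colon G\to G$ with $\theta(e)=e$ such that $x\mapsto x^{-1}\theta(x)$ is a bijection of $G$. Two orthomorphisms are orthogonal, $\theta_1\perp\theta_2$, if $x\mapsto\theta_1(x)^{-1}\theta_2(x)$ is a bijection of $G$. For an orthomorphism $\theta$: $A_{44}=\{x: o(x)=4, o(\theta(x))=4\}$, $A_{42}=\{x: o(x)=4, o(\theta(x))=2\}$, $A_{24}=\{x: o(x)=2, o(\theta(x))=4\}$, $A_{22}=\{x: o(x)=2, o(\theta(x))=2\}$; $A_{ij}$ are these sets for $\theta_1$ and $A'_{ij}$ those for $\theta_2$. *)

theory Defs
  imports "HOL-Algebra.Multiplicative_Group" "HOL-Algebra.Elementary_Groups"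
begin

definition normalised_orthomorphism :: "('a, 'b) monoid_scheme \<Rightarrow> ('a \<Rightarrow> 'a) \<Rightarrow> bool" where
  "normalised_orthomorphism G \<theta> \<longleftrightarrow>
     bij_betw \<theta> (carrier G) (carrier G) \<and> \<theta> \<one>\<^bsub>G\<^esub> = \<one>\<^bsub>G\<^esub> \<and>
     bij_betw (\<lambda>x. inv\<^bsub>G\<^esub> x \<otimes>\<^bsub>G\<^esub> \<theta> x) (carrier G) (carrier G)"

definition orth_perp :: "('a, 'b) monoid_scheme \<Rightarrow> ('a \<Rightarrow> 'a) \<Rightarrow> ('a \<Rightarrow> 'a) \<Rightarrow> bool" where
  "orth_perp G \<theta>1 \<theta>2 \<longleftrightarrow>
     bij_betw (\<lambda>x. inv\<^bsub>G\<^esub> (\<theta>1 x) \<otimes>\<^bsub>G\<^esub> \<theta>2 x) (carrier G) (carrier G)"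

definition Aset :: "('a, 'b) monoid_scheme \<Rightarrow> ('a \<Rightarrow> 'a) \<Rightarrow> nat \<Rightarrow> nat \<Rightarrow> 'a set" where
  "Aset G \<theta> i j = {x \<in> carrier G. group.ord G x = i \<and> group.ord G (\<theta> x) = j}"

definition odelta :: "('a, 'b) monoid_scheme \<Rightarrow> ('a \<Rightarrow> 'a) \<Rightarrow> ('a \<Rightarrow> 'a) \<Rightarrow> 'a \<Rightarrow> 'a" where
  "odelta G \<theta>1 \<theta>2 g = inv\<^bsub>G\<^esub> (\<theta>1 g) \<otimes>\<^bsub>G\<^esub> \<theta>2 g"

definition disjoint_union4 :: "'a set \<Rightarrow> 'a set \<Rightarrow> 'a set \<Rightarrow> 'a set \<Rightarrow> 'a set \<Rightarrow> bool" where
  "disjoint_union4 S1 S2 S3 S4 U \<longleftrightarrow>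
     S1 \<inter> S2 = {} \<and> S1 \<inter> S3 = {} \<and> S1 \<inter> S4 = {} \<and>
     S2 \<inter> S3 = {} \<and> S2 \<inter> S4 = {} \<and> S3 \<inter> S4 = {} \<and>
     S1 \<union> S2 \<union> S3 \<union> S4 = U"

definition Z2Z4 :: "(int \<times> int) monoid" where
  "Z2Z4 = integer_mod_group 2 \<times>\<times> integer_mod_group 4"

end

theory Submission imports Defs begin
lemma a: "{0..<2::int} = {0,1}" by auto
lemma b: "{0..<4::int} = {0,1,2,3}" by auto
lemma carrZ: "carrier Z2Z4 = {(0,0),(0,1),(0,2),(0,3),(1,0),(1,1),(1,2),(1,3)}"
  unfolding Z2Z4_def carrier_DirProd carrier_integer_mod_group by (simp add: a[simplified] b[simplified])
lemma grpZ: "group Z2Z4"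
  unfolding Z2Z4_def by (simp add: DirProd_group)
lemma multZ: "x \<otimes>\<^bsub>Z2Z4\<^esub> y = ((fst x + fst y) mod 2, (snd x + snd y) mod 4)"
  unfolding Z2Z4_def by (simp add: mult_DirProd')
lemma oneZ: "\<one>\<^bsub>Z2Z4\<^esub> = (0,0)"
  unfolding Z2Z4_def by simp
lemma invZ: "x \<in> carrier Z2Z4 \<Longrightarrow> inv\<^bsub>Z2Z4\<^esub> x = ((- fst x) mod 2, (- snd x) mod 4)"
proof -
  assume x: "x \<in> carrier Z2Z4"
  obtain p q where pq: "x = (p,q)" by (cases x)
  have "p \<in> carrier (integer_mod_group 2)" "q \<in> carrier (integer_mod_group 4)" using x pq unfolding Z2Z4_def by auto
  then show ?thesis unfolding pq Z2Z4_def by (simp only: inv_DirProd group_integer_mod_group inv_integer_mod_group) simp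
qed
lemma (in group) ord2: "x \<in> carrier G \<Longrightarrow> x \<otimes> x = \<one> \<Longrightarrow> x \<noteq> \<one> \<Longrightarrow> ord x = 2"
proof -
  assume x: "x \<in> carrier G" "x \<otimes> x = \<one>" "x \<noteq> \<one>"
  have e2: "x [^] (2::nat) = x \<otimes> x" using x(1) by (simp add: numeral_2_eq_2)
  have "ord x dvd 2" using x e2 pow_eq_id by simp
  moreover have "ord x \<noteq> 1" using x ord_eq_1 by blast
  moreover have "ord x \<le> 2" using calculation(1) dvd_imp_le by simp
  ultimately show ?thesis by (auto simp: le_Suc_eq numeral_2_eq_2)
qed

lemma (in group) ord4: "x \<in> carrier G \<Longrightarrow> (x \<otimes> x) \<otimes> (x \<otimes> x) = \<one> \<Longrightarrow> x \<otimes> x \<noteq> \<one> \<Longrightarrow> ord x = 4"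
proof -
  assume x: "x \<in> carrier G" "(x \<otimes> x) \<otimes> (x \<otimes> x) = \<one>" "x \<otimes> x \<noteq> \<one>"
  have e2: "x [^] (2::nat) = x \<otimes> x" using x(1) by (simp add: numeral_2_eq_2)
  have "x [^] (4::nat) = (x [^] (2::nat)) [^] (2::nat)" using x(1) by (simp add: nat_pow_pow)
  also have "\<dots> = (x \<otimes> x) \<otimes> (x \<otimes> x)" using x(1) e2 by (simp add: numeral_2_eq_2)
  finally have "x [^] (4::nat) = \<one>" using x by simp
  then have a: "ord x dvd 4" using x(1) pow_eq_id by blast
  have b: "\<not> ord x dvd 2"
  proof
    assume "ord x dvd 2"
    then have "x [^] (2::nat) = \<one>" using pow_eq_id x(1) by blast
    with e2 x(3) show False by simp
  qed
  have "ord x \<le> 4" using a dvd_imp_le by simp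
  then have "ord x \<in> {0,1,2,3,4}" by auto
  then show ?thesis using a b by auto
qed

lemma ordZ: "x \<in> carrier Z2Z4 \<Longrightarrow> group.ord Z2Z4 x =
   (if x = (0,0) then 1 else if snd x = 0 \<or> snd x = 2 then 2 else 4)"
proof -
  interpret group Z2Z4 by (rule grpZ)
  assume x: "x \<in> carrier Z2Z4"
  have o1: "ord (0,0) = 1" using ord_id oneZ by simp
  have t2: "ord y = 2" if "y \<in> {(0,2),(1,0),(1,2)}" for y
    using that by (intro ord2) (auto simp: carrZ multZ oneZ)
  have t4: "ord y = 4" if "y \<in> {(0,1),(0,3),(1,1),(1,3)}" for y
    using that by (intro ord4) (auto simp: carrZ multZ oneZ)
  from x show ?thesis
    unfolding carrZ by (elim insertE emptyE) (simp_all add: o1 t2 t4)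
qed

lemma ord4Z: "x \<in> carrier Z2Z4 \<Longrightarrow> (group.ord Z2Z4 x = 4) \<longleftrightarrow> (snd x = 1 \<or> snd x = 3)"
  by (simp add: ordZ, unfold carrZ, elim insertE emptyE, simp_all)

lemma deltaZ: "g \<in> carrier Z2Z4 \<Longrightarrow> h \<in> carrier Z2Z4 \<Longrightarrow>
   (group.ord Z2Z4 (inv\<^bsub>Z2Z4\<^esub> g \<otimes>\<^bsub>Z2Z4\<^esub> h) = 4) \<longleftrightarrow> ((group.ord Z2Z4 g = 4) \<noteq> (group.ord Z2Z4 h = 4))"
proof -
  interpret group Z2Z4 by (rule grpZ)
  assume g: "g \<in> carrier Z2Z4" and h: "h \<in> carrier Z2Z4"
  have c: "inv\<^bsub>Z2Z4\<^esub> g \<otimes>\<^bsub>Z2Z4\<^esub> h \<in> carrier Z2Z4" using g h by simp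
  have sg: "snd g \<in> {0,1,2,3}" using g unfolding carrZ by auto
  have sh: "snd h \<in> {0,1,2,3}" using h unfolding carrZ by auto
  have e: "snd (inv\<^bsub>Z2Z4\<^esub> g \<otimes>\<^bsub>Z2Z4\<^esub> h) = ((- snd g) mod 4 + snd h) mod 4"
    by (simp add: invZ[OF g] multZ)
  show ?thesis unfolding ord4Z[OF c] ord4Z[OF g] ord4Z[OF h] e
    using sg sh by (elim insertE emptyE; elim insertE emptyE; simp)
qed


lemma du4I:
  assumes "inj_on f C" "S1 \<subseteq> C" "S2 \<subseteq> C" "S3 \<subseteq> C" "S4 \<subseteq> C"
    "S1 \<inter> S2 = {}" "S1 \<inter> S3 = {}" "S1 \<inter> S4 = {}" "S2 \<inter> S3 = {}" "S2 \<inter> S4 = {}" "S3 \<inter> S4 = {}"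
    "f ` (S1 \<union> S2 \<union> S3 \<union> S4) = U"
  shows "disjoint_union4 (f ` S1) (f ` S2) (f ` S3) (f ` S4) U"
proof -
  have d: "f ` A \<inter> f ` B = {}" if "A \<subseteq> C" "B \<subseteq> C" "A \<inter> B = {}" for A B
    using that assms(1) unfolding inj_on_def by blast
  show ?thesis unfolding disjoint_union4_def using assms d by (simp add: image_Un)
qed

lemma du4D: "disjoint_union4 A B C D U \<Longrightarrow> U \<subseteq> A \<union> B \<union> C \<union> D"
  unfolding disjoint_union4_def by blast

theorem lemma2:
  fixes \<theta>1 \<theta>2 :: "int \<times> int \<Rightarrow> int \<times> int"
  assumes "normalised_orthomorphism Z2Z4 \<theta>1"
    and "normalised_orthomorphism Z2Z4 \<theta>2"
  shows "orth_perp Z2Z4 \<theta>1 \<theta>2 \<longleftrightarrow>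
    (let \<delta> = odelta Z2Z4 \<theta>1 \<theta>2; A = Aset Z2Z4 \<theta>1; A' = Aset Z2Z4 \<theta>2 in
      disjoint_union4 (\<delta> ` (A 4 4 \<inter> A' 4 4)) (\<delta> ` (A 2 4 \<inter> A' 2 4))
                      (\<delta> ` (A 4 2 \<inter> A' 4 2)) (\<delta> ` (A 2 2 \<inter> A' 2 2))
                      {g \<in> carrier Z2Z4. group.ord Z2Z4 g = 2}
    \<and> disjoint_union4 (\<delta> ` (A 4 4 \<inter> A' 4 2)) (\<delta> ` (A 4 2 \<inter> A' 4 4))
                      (\<delta> ` (A 2 4 \<inter> A' 2 2)) (\<delta> ` (A 2 2 \<inter> A' 2 4))
                      {g \<in> carrier Z2Z4. group.ord Z2Z4 g = 4})"
proof -
  interpret group Z2Z4 by (rule grpZ)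
  define \<delta> where "\<delta> = odelta Z2Z4 \<theta>1 \<theta>2"
  have \<delta>eq: "\<delta> = (\<lambda>x. inv\<^bsub>Z2Z4\<^esub> (\<theta>1 x) \<otimes>\<^bsub>Z2Z4\<^esub> \<theta>2 x)"
    unfolding \<delta>_def by (rule ext) (simp add: odelta_def)
  define A where "A = Aset Z2Z4 \<theta>1"
  define A' where "A' = Aset Z2Z4 \<theta>2"
  have b1: "bij_betw \<theta>1 (carrier Z2Z4) (carrier Z2Z4)" and e1: "\<theta>1 \<one>\<^bsub>Z2Z4\<^esub> = \<one>\<^bsub>Z2Z4\<^esub>"
    using assms(1) unfolding normalised_orthomorphism_def by auto
  have b2: "bij_betw \<theta>2 (carrier Z2Z4) (carrier Z2Z4)" and e2: "\<theta>2 \<one>\<^bsub>Z2Z4\<^esub> = \<one>\<^bsub>Z2Z4\<^esub>"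
    using assms(2) unfolding normalised_orthomorphism_def by auto
  have cl1: "\<theta>1 x \<in> carrier Z2Z4" if "x \<in> carrier Z2Z4" for x
    using b1 that bij_betwE by blast
  have cl2: "\<theta>2 x \<in> carrier Z2Z4" if "x \<in> carrier Z2Z4" for x
    using b2 that bij_betwE by blast
  have ne1: "\<theta>1 x \<noteq> \<one>\<^bsub>Z2Z4\<^esub>" if "x \<in> carrier Z2Z4" "x \<noteq> \<one>\<^bsub>Z2Z4\<^esub>" for x
    using b1 that e1 unfolding bij_betw_def inj_on_def by (metis one_closed)
  have ne2: "\<theta>2 x \<noteq> \<one>\<^bsub>Z2Z4\<^esub>" if "x \<in> carrier Z2Z4" "x \<noteq> \<one>\<^bsub>Z2Z4\<^esub>" for x
    using b2 that e2 unfolding bij_betw_def inj_on_def by (metis one_closed)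
  have dC: "\<delta> x \<in> carrier Z2Z4" if "x \<in> carrier Z2Z4" for x
    unfolding \<delta>eq using cl1 cl2 that by simp
  have d1: "\<delta> \<one>\<^bsub>Z2Z4\<^esub> = \<one>\<^bsub>Z2Z4\<^esub>" unfolding \<delta>eq e1 e2 by simp
  have ordv: "ord x = 1 \<or> ord x = 2 \<or> ord x = 4" if "x \<in> carrier Z2Z4" for x
    using ordZ[OF that] by simp
  have o1: "ord x = 1 \<longleftrightarrow> x = \<one>\<^bsub>Z2Z4\<^esub>" if "x \<in> carrier Z2Z4" for x
    using ord_eq_1 that by blast
  have key: "(ord (\<delta> x) = 4) \<longleftrightarrow> ((ord (\<theta>1 x) = 4) \<noteq> (ord (\<theta>2 x) = 4))" if "x \<in> carrier Z2Z4" for x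
    unfolding \<delta>eq using deltaZ[OF cl1[OF that] cl2[OF that]] by simp
  define E where "E = {x \<in> carrier Z2Z4. x \<noteq> \<one>\<^bsub>Z2Z4\<^esub> \<and> (ord (\<theta>1 x) = 4) = (ord (\<theta>2 x) = 4)}"
  define F where "F = {x \<in> carrier Z2Z4. x \<noteq> \<one>\<^bsub>Z2Z4\<^esub> \<and> (ord (\<theta>1 x) = 4) \<noteq> (ord (\<theta>2 x) = 4)}"
  have SE: "A 4 4 \<inter> A' 4 4 \<union> A 2 4 \<inter> A' 2 4 \<union> A 4 2 \<inter> A' 4 2 \<union> A 2 2 \<inter> A' 2 2 = E"
  proof (intro Set.set_eqI iffI)
    fix x assume "x \<in> A 4 4 \<inter> A' 4 4 \<union> A 2 4 \<inter> A' 2 4 \<union> A 4 2 \<inter> A' 4 2 \<union> A 2 2 \<inter> A' 2 2"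
    then show "x \<in> E" unfolding A_def A'_def Aset_def E_def using o1 by auto
  next
    fix x assume x: "x \<in> E"
    then have xc: "x \<in> carrier Z2Z4" and xn: "x \<noteq> \<one>\<^bsub>Z2Z4\<^esub>" and eq: "(ord (\<theta>1 x) = 4) = (ord (\<theta>2 x) = 4)"
      unfolding E_def by auto
    have "ord x \<noteq> 1" "ord (\<theta>1 x) \<noteq> 1" "ord (\<theta>2 x) \<noteq> 1"
      using o1 xc xn ne1 ne2 cl1 cl2 by auto
    then have "ord x = 2 \<or> ord x = 4" "ord (\<theta>1 x) = 2 \<or> ord (\<theta>1 x) = 4" "ord (\<theta>2 x) = 2 \<or> ord (\<theta>2 x) = 4"
      using ordv xc cl1 cl2 by blast+
    then show "x \<in> A 4 4 \<inter> A' 4 4 \<union> A 2 4 \<inter> A' 2 4 \<union> A 4 2 \<inter> A' 4 2 \<union> A 2 2 \<inter> A' 2 2"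
      unfolding A_def A'_def Aset_def using xc eq by auto
  qed
  have SF: "A 4 4 \<inter> A' 4 2 \<union> A 4 2 \<inter> A' 4 4 \<union> A 2 4 \<inter> A' 2 2 \<union> A 2 2 \<inter> A' 2 4 = F"
  proof (intro Set.set_eqI iffI)
    fix x assume "x \<in> A 4 4 \<inter> A' 4 2 \<union> A 4 2 \<inter> A' 4 4 \<union> A 2 4 \<inter> A' 2 2 \<union> A 2 2 \<inter> A' 2 4"
    then show "x \<in> F" unfolding A_def A'_def Aset_def F_def using o1 by auto
  next
    fix x assume x: "x \<in> F"
    then have xc: "x \<in> carrier Z2Z4" and xn: "x \<noteq> \<one>\<^bsub>Z2Z4\<^esub>" and eq: "(ord (\<theta>1 x) = 4) \<noteq> (ord (\<theta>2 x) = 4)"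
      unfolding F_def by auto
    have "ord x \<noteq> 1" "ord (\<theta>1 x) \<noteq> 1" "ord (\<theta>2 x) \<noteq> 1"
      using o1 xc xn ne1 ne2 cl1 cl2 by auto
    then have "ord x = 2 \<or> ord x = 4" "ord (\<theta>1 x) = 2 \<or> ord (\<theta>1 x) = 4" "ord (\<theta>2 x) = 2 \<or> ord (\<theta>2 x) = 4"
      using ordv xc cl1 cl2 by blast+
    then show "x \<in> A 4 4 \<inter> A' 4 2 \<union> A 4 2 \<inter> A' 4 4 \<union> A 2 4 \<inter> A' 2 2 \<union> A 2 2 \<inter> A' 2 4"
      unfolding A_def A'_def Aset_def using xc eq by auto
  qed
  have Asub: "A i j \<inter> A' k l \<subseteq> carrier Z2Z4" for i j k l
    unfolding A_def Aset_def by auto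
  have Adisj: "(A i j \<inter> A' k l) \<inter> (A i' j' \<inter> A' k' l') = {}" if "i \<noteq> i' \<or> j \<noteq> j' \<or> l \<noteq> l'" for i j k l i' j' k' l'
    using that unfolding A_def A'_def Aset_def by auto
  define P where "P = {g \<in> carrier Z2Z4. ord g = 2}"
  define Q where "Q = {g \<in> carrier Z2Z4. ord g = 4}"
  have fwd: "\<delta> ` E = P \<and> \<delta> ` F = Q" if bij: "bij_betw \<delta> (carrier Z2Z4) (carrier Z2Z4)"
  proof -
    have inj: "inj_on \<delta> (carrier Z2Z4)" and im: "\<delta> ` carrier Z2Z4 = carrier Z2Z4"
      using bij unfolding bij_betw_def by auto
    have dn: "\<delta> x \<noteq> \<one>\<^bsub>Z2Z4\<^esub>" if "x \<in> carrier Z2Z4" "x \<noteq> \<one>\<^bsub>Z2Z4\<^esub>" for x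
      using inj that d1 unfolding inj_on_def by (metis one_closed)
    have "\<delta> ` E \<subseteq> P"
    proof
      fix y assume "y \<in> \<delta> ` E"
      then obtain x where x: "x \<in> E" "y = \<delta> x" by auto
      then have xc: "x \<in> carrier Z2Z4" using E_def by auto
      have "ord y \<noteq> 4" using key[OF xc] x unfolding E_def by auto
      moreover have "ord y \<noteq> 1" using o1 dC[OF xc] dn[OF xc] x unfolding E_def by auto
      ultimately show "y \<in> P" unfolding P_def using ordv[OF dC[OF xc]] dC[OF xc] x by auto
    qed
    moreover have "P \<subseteq> \<delta> ` E"
    proof
      fix y assume y: "y \<in> P"
      then have yc: "y \<in> carrier Z2Z4" and yo: "ord y = 2" unfolding P_def by auto
      then obtain x where x: "x \<in> carrier Z2Z4" "y = \<delta> x" using im by blast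
      have "x \<noteq> \<one>\<^bsub>Z2Z4\<^esub>" using d1 x yo yc o1 by auto
      moreover have "(ord (\<theta>1 x) = 4) = (ord (\<theta>2 x) = 4)" using key[OF x(1)] x yo by auto
      ultimately show "y \<in> \<delta> ` E" unfolding E_def using x by auto
    qed
    moreover have "\<delta> ` F \<subseteq> Q"
    proof
      fix y assume "y \<in> \<delta> ` F"
      then obtain x where x: "x \<in> F" "y = \<delta> x" by auto
      then have xc: "x \<in> carrier Z2Z4" using F_def by auto
      have "ord y = 4" using key[OF xc] x unfolding F_def by auto
      then show "y \<in> Q" unfolding Q_def using dC[OF xc] x by auto
    qed
    moreover have "Q \<subseteq> \<delta> ` F"
    proof
      fix y assume y: "y \<in> Q"
      then have yc: "y \<in> carrier Z2Z4" and yo: "ord y = 4" unfolding Q_def by auto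
      then obtain x where x: "x \<in> carrier Z2Z4" "y = \<delta> x" using im by blast
      have "x \<noteq> \<one>\<^bsub>Z2Z4\<^esub>" using d1 x yo yc o1 by auto
      moreover have "(ord (\<theta>1 x) = 4) \<noteq> (ord (\<theta>2 x) = 4)" using key[OF x(1)] x yo by auto
      ultimately show "y \<in> \<delta> ` F" unfolding F_def using x by auto
    qed
    ultimately show ?thesis by blast
  qed
  have perp: "orth_perp Z2Z4 \<theta>1 \<theta>2 \<longleftrightarrow> bij_betw \<delta> (carrier Z2Z4) (carrier Z2Z4)"
    unfolding orth_perp_def \<delta>eq ..
  show ?thesis
    unfolding Let_def \<delta>_def[symmetric] A_def[symmetric] A'_def[symmetric] perp
      P_def[symmetric] Q_def[symmetric]
  proof
    assume bij: "bij_betw \<delta> (carrier Z2Z4) (carrier Z2Z4)"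
    then have inj: "inj_on \<delta> (carrier Z2Z4)" unfolding bij_betw_def by auto
    show "disjoint_union4 (\<delta> ` (A 4 4 \<inter> A' 4 4)) (\<delta> ` (A 2 4 \<inter> A' 2 4)) (\<delta> ` (A 4 2 \<inter> A' 4 2)) (\<delta> ` (A 2 2 \<inter> A' 2 2)) P \<and>
    disjoint_union4 (\<delta> ` (A 4 4 \<inter> A' 4 2)) (\<delta> ` (A 4 2 \<inter> A' 4 4)) (\<delta> ` (A 2 4 \<inter> A' 2 2)) (\<delta> ` (A 2 2 \<inter> A' 2 4)) Q"
      apply (intro conjI)
       apply (rule du4I[OF inj Asub Asub Asub Asub]; (rule Adisj; simp)?)
       apply (simp add: SE fwd[OF bij])
      apply (rule du4I[OF inj Asub Asub Asub Asub]; (rule Adisj; simp)?)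
      apply (simp add: SF fwd[OF bij])
      done
  next
    assume "disjoint_union4 (\<delta> ` (A 4 4 \<inter> A' 4 4)) (\<delta> ` (A 2 4 \<inter> A' 2 4)) (\<delta> ` (A 4 2 \<inter> A' 4 2)) (\<delta> ` (A 2 2 \<inter> A' 2 2)) P \<and>
    disjoint_union4 (\<delta> ` (A 4 4 \<inter> A' 4 2)) (\<delta> ` (A 4 2 \<inter> A' 4 4)) (\<delta> ` (A 2 4 \<inter> A' 2 2)) (\<delta> ` (A 2 2 \<inter> A' 2 4)) Q"
    then have PQ: "P \<subseteq> \<delta> ` carrier Z2Z4" "Q \<subseteq> \<delta> ` carrier Z2Z4"
      using du4D Asub by blast+
    have "carrier Z2Z4 \<subseteq> \<delta> ` carrier Z2Z4"
    proof
      fix y assume y: "y \<in> carrier Z2Z4"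
      show "y \<in> \<delta> ` carrier Z2Z4"
      proof (cases "y = \<one>\<^bsub>Z2Z4\<^esub>")
        case True then show ?thesis using d1 by (metis image_eqI one_closed)
      next
        case False
        then have "y \<in> P \<or> y \<in> Q" using ordv[OF y] o1[OF y] y unfolding P_def Q_def by auto
        then show ?thesis using PQ by blast
      qed
    qed
    moreover have "\<delta> ` carrier Z2Z4 \<subseteq> carrier Z2Z4" using dC by auto
    ultimately have im: "\<delta> ` carrier Z2Z4 = carrier Z2Z4" by blast
    have fin: "finite (carrier Z2Z4)" unfolding carrZ by simp
    have "inj_on \<delta> (carrier Z2Z4)" by (rule eq_card_imp_inj_on[OF fin]) (simp add: im)
    then show "bij_betw \<delta> (carrier Z2Z4) (carrier Z2Z4)" using im unfolding bij_betw_def by simp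
  qed
qed

end
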